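(* Let $(a_0,\ldots,a_n)$ be a finite sequence of positive integers. For every $\varepsilon>0$ there is $m_0>0$ such that for every integer $m\ge m_0$ and every positive integer $N$, $$|\Phi^-(\beta^N)-\Phi^-(\beta^1)|<\frac{\varepsilon}{4},$$ where $\beta^N=\beta^N_m$ is as defined in the context.
   Context: For positive integers $d_0,d_1,\ldots$, $[d_0,d_1,d_2,\ldots]$ denotes the continued fraction $\cfrac{1}{d_0+\cfrac{1}{d_1+\cfrac{1}{d_2+\cdots}}}$, and for $\beta=[d_0,d_1,\ldots]$ we write $\alpha_j(\beta)=[d_j,d_{j+1},\ldots]$. $\Phi(\beta)=\sum_{k\ge 0}\alpha_0(\beta)\cdots\alpha_{k-1}(\beta)\log\frac{1}{\alpha_k(\beta)}$ is the Yoccoz Brjuno function. For integers $m\ge1$, $N\ge1$, $\beta^N$ is the number whose digits (indexed from $0$) are $a_0,\ldots,a_n$ in positions $0,\ldots,n$, $N$ in position $n+m$, and $1$ in all other positions (so $\beta^1=[a_0,\ldots,a_n,1,1,\ldots]$). For such $\beta$ (with $m$ fixed), $\Phi^-(\beta)=\Phi(\beta)-\alpha_0(\beta)\alpha_1(\beta)\cdots\alpha_{n+m-1}(\beta)\log\frac{1}{\alpha_{n+m}(\beta)}$. *)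

theory Defs
  imports Complex_Main
begin

primrec cfin :: "nat \<Rightarrow> (nat \<Rightarrow> nat) \<Rightarrow> real" where
  "cfin 0 d = 0"
| "cfin (Suc k) d = 1 / (real (d 0) + cfin k (\<lambda>i. d (Suc i)))"

definition cfrac :: "(nat \<Rightarrow> nat) \<Rightarrow> real" where
  "cfrac d = lim (\<lambda>k. cfin k d)"

definition alpha :: "nat \<Rightarrow> (nat \<Rightarrow> nat) \<Rightarrow> real" where
  "alpha j d = cfrac (\<lambda>i. d (i + j))"

definition Phi :: "(nat \<Rightarrow> nat) \<Rightarrow> real" where
  "Phi d = (\<Sum>k. (\<Prod>i<k. alpha i d) * ln (1 / alpha k d))"

definition Phi_minus :: "nat \<Rightarrow> nat \<Rightarrow> (nat \<Rightarrow> nat) \<Rightarrow> real" where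
  "Phi_minus m n d = Phi d - (\<Prod>i<n + m. alpha i d) * ln (1 / alpha (n + m) d)"

definition betaN :: "(nat \<Rightarrow> nat) \<Rightarrow> nat \<Rightarrow> nat \<Rightarrow> nat \<Rightarrow> (nat \<Rightarrow> nat)" where
  "betaN a n m N = (\<lambda>i. if i \<le> n then a i else if i = n + m then N else 1)"

end

theory Submission
  imports Defs
begin


fun G :: "nat \<Rightarrow> (nat \<Rightarrow> nat) \<Rightarrow> real \<Rightarrow> real" where
  "G 0 s x = x"
| "G (Suc k) s x = 1 / (real (s 0) + G k (\<lambda>i. s (Suc i)) x)"

lemma G_nonneg: "x \<ge> 0 \<Longrightarrow> G k s x \<ge> 0"
  by (induction k arbitrary: s) auto

lemma G_le1: "(\<forall>i. s i \<ge> 1) \<Longrightarrow> 0 \<le> x \<Longrightarrow> x \<le> 1 \<Longrightarrow> G k s x \<le> 1"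
proof (induction k arbitrary: s)
  case 0 then show ?case by simp
next
  case (Suc k)
  have "G k (\<lambda>i. s (Suc i)) x \<ge> 0" using G_nonneg Suc by auto
  moreover have "real (s 0) \<ge> 1" using Suc by auto
  ultimately show ?case by (simp add: divide_le_eq)
qed

lemma G_cong: "(\<forall>i<k. s i = t i) \<Longrightarrow> G k s x = G k t x"
  by (induction k arbitrary: s t) auto

lemma cfin_G: "cfin k d = G k d 0"
  by (induction k arbitrary: d) auto

lemma cfin_add: "cfin (k + l) d = G k d (cfin l (\<lambda>i. d (i + k)))"
  by (induction k arbitrary: d) auto

lemma step1:
  fixes a u v :: real
  assumes "a \<ge> 1" "u \<ge> 0" "v \<ge> 0"
  shows "\<bar>1/(a+u) - 1/(a+v)\<bar> \<le> \<bar>u - v\<bar>"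
proof -
  have "1/(a+u) - 1/(a+v) = (v - u)/((a+u)*(a+v))" using assms by (simp add: field_simps)
  moreover have d: "(a+u)*(a+v) \<ge> 1" using assms mult_mono[of 1 "a+u" 1 "a+v"] by simp
  ultimately have "\<bar>1/(a+u) - 1/(a+v)\<bar> = \<bar>u - v\<bar> / ((a+u)*(a+v))"
    using assms by (simp add: abs_div abs_mult abs_minus_commute)
  also have "\<dots> \<le> \<bar>u - v\<bar> / 1" using d by (intro divide_left_mono) auto
  finally show ?thesis by simp
qed

lemma step2:
  fixes a b u v :: real
  assumes "a \<ge> 1" "b \<ge> 1" "u \<ge> 0" "v \<ge> 0"
  shows "\<bar>1/(a+1/(b+u)) - 1/(a+1/(b+v))\<bar> \<le> \<bar>u - v\<bar> / 4"
proof -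
  have e1: "1/(a+1/(b+u)) = (b+u)/(a*(b+u)+1)" using assms by (simp add: field_simps)
  have e2: "1/(a+1/(b+v)) = (b+v)/(a*(b+v)+1)" using assms by (simp add: field_simps)
  have p1: "a*(b+u)+1 \<ge> 2" using assms mult_mono[of 1 a 1 "b+u"] by simp
  have p2: "a*(b+v)+1 \<ge> 2" using assms mult_mono[of 1 a 1 "b+v"] by simp
  have "(b+u)/(a*(b+u)+1) - (b+v)/(a*(b+v)+1) = (u - v)/((a*(b+u)+1)*(a*(b+v)+1))"
    using p1 p2 by (simp add: field_simps)
  moreover have "(a*(b+u)+1)*(a*(b+v)+1) \<ge> 4" using p1 p2
    mult_mono[of 2 "a*(b+u)+1" 2 "a*(b+v)+1"] by simp
  ultimately have "\<bar>1/(a+1/(b+u)) - 1/(a+1/(b+v))\<bar> = \<bar>u - v\<bar>/((a*(b+u)+1)*(a*(b+v)+1))"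
    using e1 e2 p1 p2 by (simp add: abs_div abs_mult)
  also have "\<dots> \<le> \<bar>u - v\<bar> / 4"
    using \<open>(a*(b+u)+1)*(a*(b+v)+1) \<ge> 4\<close> by (intro divide_left_mono) auto
  finally show ?thesis .
qed

lemma G_contract:
  assumes "\<forall>i. s i \<ge> 1" "0 \<le> x" "x \<le> 1" "0 \<le> y" "y \<le> 1"
  shows "\<bar>G k s x - G k s y\<bar> \<le> 2 * (1/2)^k * \<bar>x - y\<bar>"
  using assms
proof (induction k arbitrary: s rule: less_induct)
  case (less k)
  show ?case
  proof (cases k)
    case 0 then show ?thesis by simp
  next
    case (Suc j)
    show ?thesis
    proof (cases j)
      case 0
      have "\<bar>G k s x - G k s y\<bar> \<le> \<bar>x - y\<bar>" using Suc 0 less.prems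
        by (simp add: step1)
      then show ?thesis using Suc 0 by simp
    next
      case (Suc i)
      let ?t = "\<lambda>l. s (Suc (Suc l))"
      have t1: "\<forall>l. ?t l \<ge> 1" using less.prems by auto
      have IH: "\<bar>G i ?t x - G i ?t y\<bar> \<le> 2 * (1/2)^i * \<bar>x - y\<bar>"
        using less.IH[of i ?t] t1 less.prems \<open>k = Suc j\<close> Suc by auto
      have "\<bar>G k s x - G k s y\<bar> \<le> \<bar>G i ?t x - G i ?t y\<bar> / 4"
        using \<open>k = Suc j\<close> Suc less.prems G_nonneg[of x i ?t] G_nonneg[of y i ?t]
          step2[of "real (s 0)" "real (s 1)" "G i ?t x" "G i ?t y"]
        by (simp add: numeral_2_eq_2)
      also have "\<dots> \<le> 2 * (1/2)^i * \<bar>x - y\<bar> / 4" using divide_right_mono[OF IH, of 4] by simp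
      also have "\<dots> = 2 * (1/2)^k * \<bar>x - y\<bar>" using \<open>k = Suc j\<close> Suc by simp
      finally show ?thesis .
    qed
  qed
qed



lemma cfin_01: "(\<forall>i. d i \<ge> 1) \<Longrightarrow> 0 \<le> cfin k d \<and> cfin k d \<le> 1"
  by (simp add: cfin_G G_nonneg G_le1)

lemma cfin_close:
  assumes "\<forall>i. d i \<ge> 1" "M \<le> m" "M \<le> n"
  shows "\<bar>cfin m d - cfin n d\<bar> \<le> 2 * (1/2)^M"
proof -
  obtain a b where ab: "m = M + a" "n = M + b" using assms le_Suc_ex by blast
  let ?t = "\<lambda>i. d (i + M)"
  have t: "\<forall>i. ?t i \<ge> 1" using assms by auto
  have "\<bar>cfin m d - cfin n d\<bar> = \<bar>G M d (cfin a ?t) - G M d (cfin b ?t)\<bar>"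
    using ab cfin_add by simp
  also have "\<dots> \<le> 2 * (1/2)^M * \<bar>cfin a ?t - cfin b ?t\<bar>"
    using G_contract assms cfin_01[OF t] by blast
  also have "\<dots> \<le> 2 * (1/2)^M * 1"
    using cfin_01[OF t, of a] cfin_01[OF t, of b] by (intro mult_left_mono) auto
  finally show ?thesis by simp
qed

lemma cfin_lim:
  assumes "\<forall>i. d i \<ge> 1"
  shows "(\<lambda>k. cfin k d) \<longlonglongrightarrow> cfrac d"
proof -
  have "Cauchy (\<lambda>k. cfin k d)"
  proof (rule CauchyI)
    fix e :: real assume "0 < e"
    then obtain M where M: "(1/2::real)^M < e/2" using real_arch_pow_inv[of "e/2" "1/2"] by auto
    show "\<exists>M. \<forall>m\<ge>M. \<forall>n\<ge>M. norm (cfin m d - cfin n d) < e"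
    proof (intro exI[of _ M] allI impI)
      fix m n assume "M \<le> m" "M \<le> n"
      then have "\<bar>cfin m d - cfin n d\<bar> \<le> 2 * (1/2)^M" using cfin_close[OF assms] by blast
      then show "norm (cfin m d - cfin n d) < e" using M by simp
    qed
  qed
  then have "convergent (\<lambda>k. cfin k d)" by (rule Cauchy_convergent)
  then show ?thesis unfolding cfrac_def by (simp add: convergent_LIMSEQ_iff)
qed

lemma cfrac_01:
  assumes "\<forall>i. d i \<ge> 1"
  shows "0 \<le> cfrac d \<and> cfrac d \<le> 1"
  using cfin_lim[OF assms] cfin_01[OF assms]
  by (meson LIMSEQ_le_const LIMSEQ_le_const2)

lemma G_tendsto:
  assumes "X \<longlonglongrightarrow> L" "\<forall>l. X l \<ge> 0" "L \<ge> 0" "\<forall>i. s i \<ge> 1"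
  shows "(\<lambda>l. G k s (X l)) \<longlonglongrightarrow> G k s L"
  using assms(4)
proof (induction k arbitrary: s)
  case 0 then show ?case using assms by simp
next
  case (Suc k)
  have IH: "(\<lambda>l. G k (\<lambda>i. s (Suc i)) (X l)) \<longlonglongrightarrow> G k (\<lambda>i. s (Suc i)) L"
    using Suc by auto
  have "real (s 0) + G k (\<lambda>i. s (Suc i)) L \<noteq> 0"
    using G_nonneg[OF assms(3), of k "\<lambda>i. s (Suc i)"] Suc.prems
    by (smt (verit) of_nat_1 of_nat_le_iff)
  then show ?case using IH by (auto intro!: tendsto_intros)
qed

lemma cfrac_G:
  assumes "\<forall>i. d i \<ge> 1"
  shows "cfrac d = G k d (cfrac (\<lambda>i. d (i + k)))"
proof -
  let ?t = "\<lambda>i. d (i + k)"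
  have t: "\<forall>i. ?t i \<ge> 1" using assms by auto
  have "(\<lambda>l. cfin (l + k) d) \<longlonglongrightarrow> cfrac d"
    using LIMSEQ_ignore_initial_segment[OF cfin_lim[OF assms]] by simp
  then have 1: "(\<lambda>l. G k d (cfin l ?t)) \<longlonglongrightarrow> cfrac d"
    using cfin_add[of k _ d] by (simp add: add.commute)
  have 2: "(\<lambda>l. G k d (cfin l ?t)) \<longlonglongrightarrow> G k d (cfrac ?t)"
    using G_tendsto[OF cfin_lim[OF t]] cfin_01[OF t] cfrac_01[OF t] assms by blast
  show ?thesis using LIMSEQ_unique[OF 1 2] .
qed

lemma alpha_G:
  assumes "\<forall>i. d i \<ge> 1"
  shows "alpha i d = G k (\<lambda>t. d (t + i)) (alpha (i + k) d)"
proof -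
  have t: "\<forall>j. (\<lambda>t. d (t + i)) j \<ge> 1" using assms by auto
  show ?thesis unfolding alpha_def using cfrac_G[OF t, of k] by (simp add: ac_simps)
qed

lemma alpha_01:
  assumes "\<forall>i. d i \<ge> 1"
  shows "0 \<le> alpha i d \<and> alpha i d \<le> 1"
  unfolding alpha_def using assms by (intro cfrac_01) auto

lemma alpha_rec:
  assumes "\<forall>i. d i \<ge> 1"
  shows "alpha i d = 1 / (real (d i) + alpha (Suc i) d)"
  using alpha_G[OF assms, of i 1] by simp

lemma alpha_lower:
  assumes "\<forall>i. d i \<ge> 1"
  shows "1 / (real (d i) + 1) \<le> alpha i d" "alpha i d > 0"
proof -
  have a: "0 \<le> alpha (Suc i) d" "alpha (Suc i) d \<le> 1" using alpha_01[OF assms] by auto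
  have "real (d i) \<ge> 1" using assms by (simp add: Suc_le_eq)
  then show "1 / (real (d i) + 1) \<le> alpha i d" "alpha i d > 0"
    unfolding alpha_rec[OF assms, of i] using a by (auto intro!: divide_left_mono)
qed

lemma alpha_pair:
  assumes "\<forall>i. d i \<ge> 1"
  shows "alpha i d * alpha (Suc i) d \<le> 1/2"
proof -
  let ?b = "alpha (Suc i) d"
  have a: "0 \<le> ?b" "?b \<le> 1" using alpha_01[OF assms] by auto
  have "real (d i) \<ge> 1" using assms by (simp add: Suc_le_eq)
  then have "alpha i d * ?b = ?b / (real (d i) + ?b)"
    unfolding alpha_rec[OF assms, of i] using a by simp
  also have "\<dots> \<le> 1/2" using a \<open>real (d i) \<ge> 1\<close> by (simp add: divide_le_eq)
  finally show ?thesis .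
qed

lemma prod_bound:
  assumes "\<forall>i. d i \<ge> 1"
  shows "(\<Prod>i<k. alpha i d) \<le> 2 * (3/4)^k"
proof (induction k rule: less_induct)
  case (less k)
  show ?case
  proof (cases k)
    case 0 then show ?thesis by simp
  next
    case (Suc j)
    show ?thesis
    proof (cases j)
      case 0 then show ?thesis using Suc alpha_01[OF assms, of 0] by simp
    next
      case (Suc i)
      have "(\<Prod>i<k. alpha i d) = (\<Prod>i<i. alpha i d) * (alpha i d * alpha (Suc i) d)"
        using \<open>k = Suc j\<close> Suc by (simp add: mult.assoc)
      also have "\<dots> \<le> (2 * (3/4)^i) * (1/2)"
        using less.IH[of i] \<open>k = Suc j\<close> Suc alpha_pair[OF assms, of i] alpha_01[OF assms]
        by (intro mult_mono) (auto intro!: prod_nonneg)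
      also have "\<dots> \<le> 2 * (3/4)^k" using \<open>k = Suc j\<close> Suc by simp
      finally show ?thesis .
    qed
  qed
qed



definition fterm :: "(nat \<Rightarrow> nat) \<Rightarrow> nat \<Rightarrow> real" where
  "fterm d k = (\<Prod>i<k. alpha i d) * ln (1 / alpha k d)"

lemma L_bounds:
  assumes "\<forall>i. d i \<ge> 1"
  shows "0 \<le> ln (1 / alpha k d)" "ln (1 / alpha k d) \<le> real (d k)"
proof -
  have a: "0 < alpha k d" "alpha k d \<le> 1" "1 / (real (d k) + 1) \<le> alpha k d"
    using alpha_01[OF assms] alpha_lower[OF assms] by auto
  show "0 \<le> ln (1 / alpha k d)" using a by simp
  have "1 / alpha k d \<le> real (d k) + 1" using a
    by (smt (verit, ccfv_SIG) divide_le_eq le_divide_eq mult.commute of_nat_0_le_iff)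
  then have "ln (1 / alpha k d) \<le> ln (real (d k) + 1)" using a by simp
  also have "\<dots> \<le> real (d k)" using ln_add_one_self_le_self[of "real (d k)"] by (simp add: add.commute)
  finally show "ln (1 / alpha k d) \<le> real (d k)" .
qed

lemma P_bounds:
  assumes "\<forall>i. d i \<ge> 1"
  shows "0 \<le> (\<Prod>i<k. alpha i d)" "(\<Prod>i<k. alpha i d) \<le> 1"
  using alpha_01[OF assms] by (auto intro!: prod_nonneg prod_le_1)

lemma f_bounds:
  assumes "\<forall>i. d i \<ge> 1"
  shows "0 \<le> fterm d k" "fterm d k \<le> 2 * (3/4)^k * real (d k)"
  unfolding fterm_def
  using P_bounds[OF assms, of k] L_bounds[OF assms, of k] prod_bound[OF assms, of k]
  by (auto intro!: mult_mono)

lemma f_summable: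
  assumes "\<forall>i. d i \<ge> 1" "\<forall>i. real (d i) \<le> B"
  shows "summable (fterm d)"
proof (rule summable_comparison_test')
  show "summable (\<lambda>k. 2 * B * (3/4::real)^k)"
    by (intro summable_mult summable_geometric) simp
  fix k :: nat
  have f0: "0 \<le> fterm d k" using f_bounds[OF assms(1)] by auto
  have "fterm d k \<le> 2 * (3/4)^k * real (d k)" using f_bounds[OF assms(1)] by auto
  also have "2 * (3/4)^k * real (d k) \<le> 2 * (3/4::real)^k * B" using assms(2) by (intro mult_left_mono) auto
  finally show "norm (fterm d k) \<le> 2 * B * (3/4::real)^k" using f0 by (simp add: mult_ac)
qed

lemma alpha_close:
  assumes d1: "\<forall>i. d i \<ge> 1" and e1: "\<forall>i. e i \<ge> 1" and eq: "\<forall>i<p. d i = e i" and "i \<le> p"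
  shows "\<bar>alpha i d - alpha i e\<bar> \<le> 2 * (1/2)^(p - i)"
proof -
  let ?k = "p - i"
  have ik: "i + ?k = p" using assms by simp
  have "alpha i d = G ?k (\<lambda>t. d (t + i)) (alpha p d)" using alpha_G[OF d1, of i ?k] ik by simp
  also have "\<dots> = G ?k (\<lambda>t. e (t + i)) (alpha p d)" using eq by (intro G_cong) auto
  finally have 1: "alpha i d = G ?k (\<lambda>t. e (t + i)) (alpha p d)" .
  have 2: "alpha i e = G ?k (\<lambda>t. e (t + i)) (alpha p e)" using alpha_G[OF e1, of i ?k] ik by simp
  have t: "\<forall>j. (\<lambda>t. e (t + i)) j \<ge> 1" using e1 by auto
  have "\<bar>alpha i d - alpha i e\<bar> \<le> 2 * (1/2)^?k * \<bar>alpha p d - alpha p e\<bar>"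
    unfolding 1 2 using G_contract[OF t] alpha_01[OF d1, of p] alpha_01[OF e1, of p] by blast
  also have "\<dots> \<le> 2 * (1/2)^?k * 1"
    using alpha_01[OF d1, of p] alpha_01[OF e1, of p] by (intro mult_left_mono) auto
  finally show ?thesis by simp
qed

lemma ln_lip1:
  fixes c x y :: real
  assumes "0 < c" "c \<le> x" "c \<le> y"
  shows "ln x - ln y \<le> \<bar>x - y\<bar> / c"
proof -
  have "ln x - ln y = ln (x / y)" using assms by (simp add: ln_div)
  also have "\<dots> \<le> x / y - 1" using assms by (intro ln_le_minus_one) simp
  also have "\<dots> = (x - y) / y" using assms by (simp add: field_simps)
  also have "\<dots> \<le> \<bar>x - y\<bar> / y" using assms by (intro divide_right_mono) auto
  also have "\<dots> \<le> \<bar>x - y\<bar> / c" using assms by (intro divide_left_mono) auto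
  finally show ?thesis .
qed

lemma ln_lip:
  fixes c x y :: real
  assumes "0 < c" "c \<le> x" "c \<le> y"
  shows "\<bar>ln x - ln y\<bar> \<le> \<bar>x - y\<bar> / c"
  using ln_lip1[OF assms] ln_lip1[OF assms(1,3,2)] by (simp add: abs_minus_commute abs_le_iff)

lemma term_diff:
  assumes d1: "\<forall>i. d i \<ge> 1" and e1: "\<forall>i. e i \<ge> 1"
    and A: "\<forall>i\<le>k. real (d i) \<le> A \<and> real (e i) \<le> A"
    and cl: "\<forall>i\<le>k. \<bar>alpha i d - alpha i e\<bar> \<le> \<delta>"
  shows "\<bar>fterm d k - fterm e k\<bar> \<le> (real k * \<delta>) * A + (A + 1) * \<delta>"
proof -
  define Pd where "Pd = (\<Prod>i<k. alpha i d)"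
  define Pe where "Pe = (\<Prod>i<k. alpha i e)"
  define Ld where "Ld = ln (1 / alpha k d)"
  define Le where "Le = ln (1 / alpha k e)"
  have "norm (Pd - Pe) \<le> (\<Sum>i<k. norm (alpha i d - alpha i e))"
    unfolding Pd_def Pe_def
  proof (rule norm_prod_diff)
    fix i show "norm (alpha i d) \<le> 1" using alpha_01[OF d1, of i] by simp
  next
    fix i show "norm (alpha i e) \<le> 1" using alpha_01[OF e1, of i] by simp
  qed
  also have "\<dots> \<le> (\<Sum>i<k. \<delta>)" using cl by (intro sum_mono) simp
  finally have P: "\<bar>Pd - Pe\<bar> \<le> real k * \<delta>" by simp
  have Ld: "0 \<le> Ld" "Ld \<le> A" unfolding Ld_def using L_bounds[OF d1, of k] A by auto
  have Pe: "0 \<le> Pe" "Pe \<le> 1" unfolding Pe_def using P_bounds[OF e1] by auto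
  have "real (d 0) \<ge> 1" using d1 by simp
  then have A1: "A \<ge> 1" using A by auto
  have dk: "real (d k) + 1 \<le> A + 1" "real (e k) + 1 \<le> A + 1" using A by auto
  have "1 / (A + 1) \<le> 1 / (real (d k) + 1)" using A1 by (intro divide_left_mono[OF dk(1)]) (auto intro!: mult_pos_pos)
  also have "\<dots> \<le> alpha k d" by (rule alpha_lower(1)[OF d1])
  finally have lo1: "1 / (A + 1) \<le> alpha k d" .
  have "1 / (A + 1) \<le> 1 / (real (e k) + 1)" using A1 by (intro divide_left_mono[OF dk(2)]) (auto intro!: mult_pos_pos)
  also have "\<dots> \<le> alpha k e" by (rule alpha_lower(1)[OF e1])
  finally have lo2: "1 / (A + 1) \<le> alpha k e" .
  have "\<bar>Ld - Le\<bar> = \<bar>ln (alpha k e) - ln (alpha k d)\<bar>"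
    unfolding Ld_def Le_def using alpha_lower(2)[OF d1, of k] alpha_lower(2)[OF e1, of k]
    by (simp add: ln_div)
  also have "\<dots> \<le> \<bar>alpha k e - alpha k d\<bar> / (1 / (A + 1))"
    using A1 lo1 lo2 by (intro ln_lip) auto
  also have "\<dots> = (A + 1) * \<bar>alpha k d - alpha k e\<bar>" by (simp add: abs_minus_commute)
  also have "\<dots> \<le> (A + 1) * \<delta>" using cl A1 by (intro mult_left_mono) auto
  finally have L: "\<bar>Ld - Le\<bar> \<le> (A + 1) * \<delta>" .
  have "fterm d k - fterm e k = (Pd - Pe) * Ld + Pe * (Ld - Le)"
    unfolding fterm_def Pd_def Pe_def Ld_def Le_def by (simp add: algebra_simps)
  then have "\<bar>fterm d k - fterm e k\<bar> \<le> \<bar>(Pd - Pe) * Ld\<bar> + \<bar>Pe * (Ld - Le)\<bar>"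
    by (simp add: abs_triangle_ineq)
  also have "\<dots> = \<bar>Pd - Pe\<bar> * Ld + Pe * \<bar>Ld - Le\<bar>"
    using Ld Pe by (simp add: abs_mult)
  also have "\<dots> \<le> (real k * \<delta>) * A + 1 * ((A + 1) * \<delta>)"
  proof (rule add_mono)
    show "\<bar>Pd - Pe\<bar> * Ld \<le> real k * \<delta> * A" using P Ld by (intro mult_mono) auto
    show "Pe * \<bar>Ld - Le\<bar> \<le> 1 * ((A + 1) * \<delta>)" using Pe L by (intro mult_mono) auto
  qed
  finally show ?thesis by simp
qed



theorem mainTheorem6:
  fixes a :: "nat \<Rightarrow> nat" and n :: nat
  assumes "\<forall>i\<le>n. a i > 0"
  shows "\<forall>\<epsilon>::real. \<epsilon> > 0 \<longrightarrow> (\<exists>m0::nat. m0 > 0 \<and> (\<forall>m N. m \<ge> m0 \<longrightarrow> N \<ge> 1 \<longrightarrow>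
           \<bar>Phi_minus m n (betaN a n m N) - Phi_minus m n (betaN a n m 1)\<bar> < \<epsilon> / 4))"
proof (intro allI impI)
  fix \<epsilon> :: real assume eps: "\<epsilon> > 0"
  define A where "A = real (\<Sum>i\<le>n. a i) + 1"
  have A1: "A \<ge> 1" unfolding A_def by (simp add: sum_nonneg)
  have aA: "real (a i) \<le> A" if "i \<le> n" for i
  proof -
    have "a i \<le> (\<Sum>j\<le>n. a j)" using that by (intro member_le_sum) auto
    then show ?thesis unfolding A_def by linarith
  qed
  obtain K where K: "(3/4::real)^K < \<epsilon> / (64 * A)"
    using real_arch_pow_inv[of "\<epsilon> / (64 * A)" "3/4"] eps A1 by auto
  define C where "C = 2 * real K * (real K * A + A + 1)"
  have C0: "C \<ge> 0" unfolding C_def using A1 by simp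
  obtain M where M: "(1/2::real)^M < \<epsilon> / (8 * (C + 1))"
    using real_arch_pow_inv[of "\<epsilon> / (8 * (C + 1))" "1/2"] eps C0 by auto
  have tailsmall: "8 * A * (3/4)^K < \<epsilon> / 8"
    using K A1 by (simp add: field_simps)
  have finsmall: "C * (1/2)^M < \<epsilon> / 8"
  proof -
    have "C * (1/2::real)^M \<le> (C + 1) * (1/2)^M" by (intro mult_right_mono) auto
    also have "\<dots> < \<epsilon> / 8" using M C0 by (simp add: field_simps)
    finally show ?thesis .
  qed
  show "\<exists>m0::nat. m0 > 0 \<and> (\<forall>m N. m \<ge> m0 \<longrightarrow> N \<ge> 1 \<longrightarrow>
           \<bar>Phi_minus m n (betaN a n m N) - Phi_minus m n (betaN a n m 1)\<bar> < \<epsilon> / 4)"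
  proof (intro exI[of _ "K + M + 1"] conjI allI impI)
    show "0 < K + M + 1" by simp
    fix m N :: nat assume m: "K + M + 1 \<le> m" and N: "1 \<le> N"
    define d where "d = betaN a n m N"
    define e where "e = betaN a n m 1"
    define p where "p = n + m"
    have d1: "\<forall>i. d i \<ge> 1" unfolding d_def betaN_def using assms N by (auto simp: Suc_le_eq)
    have e1: "\<forall>i. e i \<ge> 1" unfolding e_def betaN_def using assms by (auto simp: Suc_le_eq)
    have dA: "real (d i) \<le> A" if "i \<noteq> p" for i
      unfolding d_def betaN_def using that aA A1 p_def by auto
    have eA: "real (e i) \<le> A" for i
      unfolding e_def betaN_def using aA A1 by auto
    have dB: "real (d i) \<le> A + real N" for i
      unfolding d_def betaN_def using aA A1 by (auto simp: add_increasing2)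
    have eq: "d i = e i" if "i \<noteq> p" for i
      unfolding d_def e_def betaN_def using that p_def by auto
    have sd: "summable (fterm d)" using f_summable[OF d1] dB by blast
    have se: "summable (fterm e)" using f_summable[OF e1] eA by blast
    have Pd: "Phi_minus m n d = Phi d - fterm d p"
      unfolding Phi_minus_def fterm_def p_def by (simp add: add.commute)
    have Pe: "Phi_minus m n e = Phi e - fterm e p"
      unfolding Phi_minus_def fterm_def p_def by (simp add: add.commute)
    have Phd: "Phi d = suminf (fterm d)" unfolding Phi_def fterm_def by simp
    have Phe: "Phi e = suminf (fterm e)" unfolding Phi_def fterm_def by simp
    define g where "g k = (if k = p then 0 else fterm d k - fterm e k)" for k
    have s1: "(\<lambda>k. fterm d k - fterm e k) sums (Phi d - Phi e)"
      unfolding Phd Phe by (intro sums_diff summable_sums sd se)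
    have s2: "(\<lambda>k. if k = p then fterm d k - fterm e k else 0) sums (fterm d p - fterm e p)"
      by (rule sums_single)
    have "(\<lambda>k. (fterm d k - fterm e k) - (if k = p then fterm d k - fterm e k else 0))
          sums ((Phi d - Phi e) - (fterm d p - fterm e p))"
      by (rule sums_diff[OF s1 s2])
    moreover have "(\<lambda>k. (fterm d k - fterm e k) - (if k = p then fterm d k - fterm e k else 0)) = g"
      unfolding g_def by auto
    ultimately have gs: "g sums (Phi_minus m n d - Phi_minus m n e)"
      unfolding Pd Pe by (simp add: algebra_simps)
    then have sg: "summable g" and geq: "Phi_minus m n d - Phi_minus m n e = suminf g"
      by (auto simp: sums_iff)
    have gb: "\<bar>g k\<bar> \<le> 2 * A * (3/4)^k" for k
    proof (cases "k = p")
      case True then show ?thesis unfolding g_def using A1 by simp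
    next
      case False
      have m1: "2 * (3/4::real)^k * real (d k) \<le> 2 * (3/4)^k * A"
        using dA[OF False] by (intro mult_left_mono) auto
      have m2: "2 * (3/4::real)^k * real (e k) \<le> 2 * (3/4)^k * A"
        using eA by (intro mult_left_mono) auto
      have "fterm d k \<le> 2 * (3/4)^k * A" by (rule order_trans[OF f_bounds(2)[OF d1] m1])
      moreover have "fterm e k \<le> 2 * (3/4)^k * A" by (rule order_trans[OF f_bounds(2)[OF e1] m2])
      moreover have "0 \<le> fterm d k" "0 \<le> fterm e k" using f_bounds(1)[OF d1] f_bounds(1)[OF e1] by auto
      ultimately have "fterm d k \<le> 2 * A * (3/4)^k" "fterm e k \<le> 2 * A * (3/4)^k"
        "0 \<le> fterm d k" "0 \<le> fterm e k" by (simp_all add: mult_ac)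
      then show ?thesis unfolding g_def using False by (simp add: abs_le_iff)
    qed
    define h where "h j = (2 * A * (3/4)^K) * (3/4::real)^j" for j
    have hs: "h sums ((2 * A * (3/4)^K) * (1 / (1 - 3/4)))"
      unfolding h_def by (intro sums_mult geometric_sums) simp
    have gh: "\<bar>g (j + K)\<bar> \<le> h j" for j
      using gb[of "j + K"] unfolding h_def by (simp add: power_add mult_ac)
    have sabs: "summable (\<lambda>j. \<bar>g (j + K)\<bar>)"
      using gh hs by (intro summable_rabs_comparison_test[of _ h]) (auto simp: sums_iff)
    have tail: "\<bar>(\<Sum>j. g (j + K))\<bar> \<le> 8 * A * (3/4)^K"
    proof -
      have "\<bar>(\<Sum>j. g (j + K))\<bar> \<le> (\<Sum>j. \<bar>g (j + K)\<bar>)" by (rule summable_rabs[OF sabs])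
      also have "\<dots> \<le> suminf h" using gh sabs hs by (intro suminf_le) (auto simp: sums_iff)
      also have "\<dots> = 8 * A * (3/4)^K" using hs by (simp add: sums_iff)
      finally show ?thesis .
    qed
    define \<delta> where "\<delta> = 2 * (1/2::real)^M"
    have fin1: "\<bar>g i\<bar> \<le> (real K * \<delta>) * A + (A + 1) * \<delta>" if iK: "i < K" for i
    proof -
      have ip: "i < p" using iK m p_def by simp
      have "\<bar>fterm d i - fterm e i\<bar> \<le> (real i * \<delta>) * A + (A + 1) * \<delta>"
      proof (rule term_diff[OF d1 e1])
        show "\<forall>j\<le>i. real (d j) \<le> A \<and> real (e j) \<le> A" using dA eA ip by auto
        show "\<forall>j\<le>i. \<bar>alpha j d - alpha j e\<bar> \<le> \<delta>"
        proof (intro allI impI)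
          fix j assume ji: "j \<le> i"
          have "\<bar>alpha j d - alpha j e\<bar> \<le> 2 * (1/2)^(p - j)"
            using alpha_close[OF d1 e1, of p j] eq ji ip by auto
          also have "(1/2::real)^(p - j) \<le> (1/2)^M"
            using ji iK m p_def by (intro power_decreasing) auto
          then have "2 * (1/2::real)^(p - j) \<le> \<delta>" unfolding \<delta>_def by simp
          finally show "\<bar>alpha j d - alpha j e\<bar> \<le> \<delta>" .
        qed
      qed
      also have "\<dots> \<le> (real K * \<delta>) * A + (A + 1) * \<delta>"
        using iK A1 unfolding \<delta>_def by (intro add_mono mult_right_mono) auto
      finally show ?thesis unfolding g_def using ip by simp
    qed
    have fin: "\<bar>(\<Sum>i<K. g i)\<bar> \<le> C * (1/2)^M"
    proof -
      have "\<bar>(\<Sum>i<K. g i)\<bar> \<le> (\<Sum>i<K. \<bar>g i\<bar>)" by (rule sum_abs)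
      also have "\<dots> \<le> (\<Sum>i<K. (real K * \<delta>) * A + (A + 1) * \<delta>)" using fin1 by (intro sum_mono) auto
      also have "\<dots> = C * (1/2)^M" unfolding C_def \<delta>_def by (simp add: algebra_simps)
      finally show ?thesis .
    qed
    have "suminf g = (\<Sum>j. g (j + K)) + (\<Sum>i<K. g i)" by (rule suminf_split_initial_segment[OF sg])
    then have "\<bar>suminf g\<bar> \<le> 8 * A * (3/4)^K + C * (1/2)^M" using tail fin by linarith
    then have "\<bar>suminf g\<bar> < \<epsilon> / 4" using tailsmall finsmall by linarith
    then show "\<bar>Phi_minus m n (betaN a n m N) - Phi_minus m n (betaN a n m 1)\<bar> < \<epsilon> / 4"
      using geq unfolding d_def e_def by simp
  qed
qed

end
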